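(* Let $X$ be an $n$-dimensional random vector with $X\le_{\mathrm{cx}}\mathcal N(\mu,\sigma^2I)$, and let $\alpha>0$. Then $$\mathrm P(\|X-\mu\|_\infty\le\alpha)\ge1-\sqrt2\,n\,e^{-\alpha^2/(4\sigma^2)}.$$ In particular, for $\gamma\in(0,1]$, $\mathrm P\bigl(\|X-\mu\|_\infty\le2\sigma\sqrt{\log(\sqrt2n/\gamma)}\bigr)\ge1-\gamma$.
   Context: For random vectors $X,Y$ in $\mathbb R^n$, $X\le_{\mathrm{cx}}Y$ (convex order) means $\mathbb Ef(X)\le\mathbb Ef(Y)$ for all convex $f:\mathbb R^n\to\mathbb R$ for which the expectations exist; a distribution on the right denotes a random vector with that distribution. *)

theory Defs
  imports "HOL-Probability.Probability"
begin

text \<open>Isotropic Gaussian N(mu, sigma^2 I) on real^'n (sigma is the standard deviation).\<close>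
definition gauss_iso :: "real^'n \<Rightarrow> real \<Rightarrow> (real^'n) measure" where
  "gauss_iso mu \<sigma> = density lborel (\<lambda>x. ennreal (\<Prod>i\<in>UNIV. normal_density (mu$i) \<sigma> (x$i)))"

definition expect_exists :: "'a measure \<Rightarrow> ('a \<Rightarrow> real) \<Rightarrow> bool" where
  "expect_exists M g \<longleftrightarrow> g \<in> borel_measurable M \<and>
     ((\<integral>\<^sup>+x. ennreal (g x) \<partial>M) \<noteq> \<infinity> \<or> (\<integral>\<^sup>+x. ennreal (- g x) \<partial>M) \<noteq> \<infinity>)"

definition ext_expect :: "'a measure \<Rightarrow> ('a \<Rightarrow> real) \<Rightarrow> ereal" where
  "ext_expect M g = enn2ereal (\<integral>\<^sup>+x. ennreal (g x) \<partial>M) - enn2ereal (\<integral>\<^sup>+x. ennreal (- g x) \<partial>M)"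

definition cx_le :: "'a measure \<Rightarrow> ('a \<Rightarrow> real^'n) \<Rightarrow> (real^'n) measure \<Rightarrow> bool" where
  "cx_le M X N \<longleftrightarrow> (\<forall>f :: real^'n \<Rightarrow> real. convex_on UNIV f \<longrightarrow>
      expect_exists M (\<lambda>\<omega>. f (X \<omega>)) \<longrightarrow> expect_exists N f \<longrightarrow>
      ext_expect M (\<lambda>\<omega>. f (X \<omega>)) \<le> ext_expect N f)"

definition linf_norm :: "real^'n \<Rightarrow> real" where
  "linf_norm x = Max (range (\<lambda>i. \<bar>x$i\<bar>))"

end

theory Submission
  imports Defs
begin



lemma conv_f:
  fixes c m :: real and i :: "'n::finite"
  assumes "0 < c"
  shows "convex_on UNIV (\<lambda>x::real^'n. exp ((x$i - m)^2 / c))"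
proof (rule convex_onI)
  fix t :: real and x y :: "real^'n"
  assume t: "0 < t" "t < 1"
  let ?q = "\<lambda>s::real. s^2 / c"
  have q: "convex_on UNIV ?q" using assms convex_power2 by (intro convex_on_cdiv) auto
  define a where "a = x$i - m"
  define b where "b = y$i - m"
  have e: "((1 - t) *\<^sub>R x + t *\<^sub>R y)$i - m = (1-t) * a + t * b"
    by (simp add: a_def b_def algebra_simps)
  have "?q ((1-t) * a + t * b) \<le> (1-t) * ?q a + t * ?q b"
    using convex_onD[OF q, of t a b] t by simp
  then have "exp (?q ((1-t) * a + t * b)) \<le> exp ((1-t) * ?q a + t * ?q b)" by simp
  also have "\<dots> \<le> (1-t) * exp (?q a) + t * exp (?q b)"
    using convex_onD[OF exp_convex, of t "?q a" "?q b"] t by simp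
  finally show "exp ((((1 - t) *\<^sub>R x + t *\<^sub>R y)$i - m)^2 / c) \<le> (1-t) * exp ((x$i - m)^2 / c) + t * exp ((y$i - m)^2 / c)"
    unfolding e a_def b_def .
qed simp

lemma nd_one: "0 < s \<Longrightarrow> (\<integral>\<^sup>+t. ennreal (normal_density m s t) \<partial>lborel) = 1"
  by (subst nn_integral_eq_integral) auto

lemma gauss1:
  fixes m \<sigma> :: real assumes "0 < \<sigma>"
  shows "(\<integral>\<^sup>+t. ennreal (normal_density m \<sigma> t * exp ((t-m)^2/(4*\<sigma>^2))) \<partial>lborel) = ennreal (sqrt 2)"
proof -
  have sq: "(sqrt 2 * \<sigma>)\<^sup>2 = 2 * \<sigma>\<^sup>2" by (simp add: power_mult_distrib)
  have pt: "normal_density m \<sigma> t * exp ((t-m)^2/(4*\<sigma>^2)) = sqrt 2 * normal_density m (sqrt 2 * \<sigma>) t" for t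
  proof -
    define q where "q = (t - m)\<^sup>2"
    define s where "s = \<sigma>\<^sup>2"
    have s0: "0 < s" using assms by (simp add: s_def)
    have ar: "-q / (2 * s) + q / (4 * s) = - q / (2 * (2 * s))" using s0 by (simp add: field_simps)
    have h1: "exp (-(t - m)\<^sup>2/ (2 * \<sigma>\<^sup>2)) * exp ((t-m)^2/(4*\<sigma>^2)) = exp (-(t - m)\<^sup>2/ (2 * (sqrt 2 * \<sigma>)\<^sup>2))"
      unfolding exp_add[symmetric] sq using ar unfolding q_def s_def by simp
    have r: "sqrt (2 * pi * (sqrt 2 * \<sigma>)\<^sup>2) = sqrt 2 * sqrt (2 * pi * \<sigma>\<^sup>2)"
      unfolding sq by (simp add: real_sqrt_mult[symmetric] mult.left_commute)
    have h2: "1 / sqrt (2 * pi * \<sigma>\<^sup>2) = sqrt 2 * (1 / sqrt (2 * pi * (sqrt 2 * \<sigma>)\<^sup>2))"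
      unfolding r by simp
    have "normal_density m \<sigma> t * exp ((t-m)^2/(4*\<sigma>^2))
        = (1 / sqrt (2 * pi * \<sigma>\<^sup>2)) * (exp (-(t - m)\<^sup>2/ (2 * \<sigma>\<^sup>2)) * exp ((t-m)^2/(4*\<sigma>^2)))"
      unfolding normal_density_def by (simp only: mult.assoc)
    also have "\<dots> = sqrt 2 * ((1 / sqrt (2 * pi * (sqrt 2 * \<sigma>)\<^sup>2)) * exp (-(t - m)\<^sup>2/ (2 * (sqrt 2 * \<sigma>)\<^sup>2)))"
      unfolding h1 h2 by (simp only: mult.assoc)
    also have "\<dots> = sqrt 2 * normal_density m (sqrt 2 * \<sigma>) t"
      unfolding normal_density_def ..
    finally show ?thesis .
  qed
  have "(\<integral>\<^sup>+t. ennreal (normal_density m \<sigma> t * exp ((t-m)^2/(4*\<sigma>^2))) \<partial>lborel)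
     = (\<integral>\<^sup>+t. ennreal (sqrt 2) * ennreal (normal_density m (sqrt 2 * \<sigma>) t) \<partial>lborel)"
    unfolding pt by (simp add: ennreal_mult)
  also have "\<dots> = ennreal (sqrt 2)" using assms by (subst nn_integral_cmult) (auto simp: nd_one)
  finally show ?thesis .
qed

lemma gauss_n:
  fixes mu :: "real^'n" and i :: 'n and \<sigma> :: real assumes "0<\<sigma>"
  shows "(\<integral>\<^sup>+x. ennreal (exp ((x$i - mu$i)^2/(4*\<sigma>^2))) \<partial>density lborel (\<lambda>x. ennreal (\<Prod>i\<in>UNIV. normal_density (mu$i) \<sigma> (x$i)))) = ennreal (sqrt 2)"
proof -
  define E where "E t = exp ((t - mu$i)^2/(4*\<sigma>^2))" for t
  define h where "h b t = normal_density (mu \<bullet> b) \<sigma> t * (if b = axis i 1 then E t else 1)" for b::"real^'n" and t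
  have B: "Basis = range (\<lambda>j::'n. axis j (1::real))" by (auto simp: Basis_vec_def)
  have inj: "inj (\<lambda>j::'n. axis j (1::real))" by (auto simp: inj_def axis_eq_axis)
  have hnn: "0 \<le> h b t" for b t by (auto simp: h_def E_def)
  have hm[measurable]: "h b \<in> borel_measurable borel" for b unfolding h_def E_def by measurable
  have pt: "(\<Prod>j\<in>UNIV. normal_density (mu$j) \<sigma> (x$j)) * E (x$i) = (\<Prod>b\<in>Basis. h b (x \<bullet> b))" for x :: "real^'n"
  proof -
    have "(\<Prod>b\<in>Basis. h b (x \<bullet> b)) = (\<Prod>j\<in>UNIV. h (axis j 1) (x $ j))"
      unfolding B by (subst prod.reindex[OF inj]) (simp add: inner_axis)
    also have "\<dots> = (\<Prod>j\<in>UNIV. normal_density (mu$j) \<sigma> (x$j) * (if j = i then E (x$j) else 1))"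
      by (intro prod.cong) (auto simp: h_def inner_axis axis_eq_axis)
    also have "\<dots> = (\<Prod>j\<in>UNIV. normal_density (mu$j) \<sigma> (x$j)) * (\<Prod>j\<in>UNIV. (if j = i then E (x$j) else 1))"
      by (rule prod.distrib)
    also have "(\<Prod>j\<in>UNIV. (if j = i then E (x$j) else 1)) = E (x$i)"
      by (simp add: prod.delta)
    finally show ?thesis by simp
  qed
  have "(\<integral>\<^sup>+x. ennreal (exp ((x$i - mu$i)^2/(4*\<sigma>^2))) \<partial>density lborel (\<lambda>x. ennreal (\<Prod>i\<in>UNIV. normal_density (mu$i) \<sigma> (x$i))))
     = (\<integral>\<^sup>+x. ennreal (\<Prod>i\<in>UNIV. normal_density (mu$i) \<sigma> (x$i)) * ennreal (E (x$i)) \<partial>lborel)"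
    unfolding E_def by (subst nn_integral_density) auto
  also have "\<dots> = (\<integral>\<^sup>+x. (\<Prod>b\<in>Basis. ennreal (h b (x \<bullet> b))) \<partial>lborel)"
    apply (intro nn_integral_cong)
    apply (subst ennreal_mult'[symmetric])
     apply (simp add: prod_nonneg)
    apply (subst pt)
    apply (subst prod_ennreal) using hnn by auto
  also have "\<dots> = (\<Prod>b\<in>Basis. (\<integral>\<^sup>+t. ennreal (h b t) \<partial>lborel))"
    by (rule nn_integral_lborel_prod) auto
  also have "\<dots> = (\<Prod>j\<in>UNIV. (\<integral>\<^sup>+t. ennreal (h (axis j 1) t) \<partial>lborel))"
    unfolding B by (subst prod.reindex[OF inj]) simp
  also have "\<dots> = (\<Prod>j\<in>UNIV. (if j = i then ennreal (sqrt 2) else 1))"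
  proof (intro prod.cong refl)
    fix j
    show "(\<integral>\<^sup>+t. ennreal (h (axis j 1) t) \<partial>lborel) = (if j = i then ennreal (sqrt 2) else 1)"
    proof (cases "j = i")
      case True then show ?thesis using gauss1[OF assms, of "mu$i"] by (simp add: h_def E_def inner_axis)
    next
      case False then show ?thesis using nd_one[OF assms] by (simp add: h_def inner_axis axis_eq_axis)
    qed
  qed
  also have "\<dots> = ennreal (sqrt 2)" by (simp add: prod.delta)
  finally show ?thesis .
qed


lemma vn[measurable]: "(\<lambda>x::real^'n. x $ i) \<in> borel_measurable borel"
  by (intro borel_measurable_continuous_onI linear_continuous_on bounded_linear_vec_nth)

lemma linf_le: "linf_norm (v::real^'n) \<le> a \<longleftrightarrow> (\<forall>i. \<bar>v$i\<bar> \<le> a)"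
  unfolding linf_norm_def by (subst Max_le_iff) auto

lemma tail_bound:
  fixes M :: "'a measure" and X :: "'a \<Rightarrow> real^'n" and mu :: "real^'n" and \<sigma> \<alpha> :: real
  assumes P: "prob_space M"
    and Xm[measurable]: "X \<in> borel_measurable M"
    and s: "\<sigma> > 0"
    and cx: "cx_le M X (gauss_iso mu \<sigma>)"
    and a0: "0 \<le> \<alpha>"
  shows "measure M {\<omega>\<in>space M. \<alpha> < \<bar>X \<omega> $ i - mu $ i\<bar>} \<le> sqrt 2 * exp (- (\<alpha>^2) / (4 * \<sigma>^2))"
proof -
  interpret prob_space M by (rule P)
  define c where "c = 4 * \<sigma>^2"
  have c: "0 < c" using s by (simp add: c_def)
  define f where "f x = exp ((x$i - mu$i)^2 / c)" for x :: "real^'n"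
  have fm[measurable]: "f \<in> borel_measurable borel" unfolding f_def by measurable
  have cvx: "convex_on UNIV f" unfolding f_def by (rule conv_f[OF c])
  have neg0: "(\<integral>\<^sup>+x. ennreal (- g x) \<partial>N) = 0" if "\<And>x. 0 \<le> g x" for N and g :: "'b \<Rightarrow> real"
    using that by (simp add: ennreal_neg)
  have sN: "sets (gauss_iso mu \<sigma>) = sets borel" by (simp add: gauss_iso_def)
  have e1: "expect_exists M (\<lambda>\<omega>. f (X \<omega>))"
    unfolding expect_exists_def by (simp add: neg0 f_def)
  have e2: "expect_exists (gauss_iso mu \<sigma>) f"
    proof -
    have "f \<in> borel_measurable (gauss_iso mu \<sigma>)"
      by (subst measurable_cong_sets[OF sN refl]) (rule fm)
    then show ?thesis unfolding expect_exists_def by (simp add: neg0 f_def)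
  qed
  have "ext_expect M (\<lambda>\<omega>. f (X \<omega>)) \<le> ext_expect (gauss_iso mu \<sigma>) f"
    using cx cvx e1 e2 unfolding cx_le_def by blast
  then have "enn2ereal (\<integral>\<^sup>+\<omega>. ennreal (f (X \<omega>)) \<partial>M) \<le> enn2ereal (\<integral>\<^sup>+x. ennreal (f x) \<partial>gauss_iso mu \<sigma>)"
    unfolding ext_expect_def by (simp add: neg0 f_def zero_ennreal.rep_eq)
  also have "(\<integral>\<^sup>+x. ennreal (f x) \<partial>gauss_iso mu \<sigma>) = ennreal (sqrt 2)"
    unfolding f_def c_def gauss_iso_def by (rule gauss_n[OF s])
  finally have I: "(\<integral>\<^sup>+\<omega>. ennreal (f (X \<omega>)) \<partial>M) \<le> ennreal (sqrt 2)"
    unfolding less_eq_ennreal.rep_eq .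
  define A where "A = {\<omega>\<in>space M. \<alpha> < \<bar>X \<omega> $ i - mu $ i\<bar>}"
  have Am: "A \<in> sets M" unfolding A_def by measurable
  define K where "K = exp (\<alpha>^2 / c)"
  have K: "0 < K" by (simp add: K_def)
  have "ennreal K * emeasure M A = (\<integral>\<^sup>+\<omega>. ennreal K * indicator A \<omega> \<partial>M)"
    using Am by (simp add: nn_integral_cmult_indicator)
  also have "\<dots> \<le> (\<integral>\<^sup>+\<omega>. ennreal (f (X \<omega>)) \<partial>M)"
  proof (intro nn_integral_mono)
    fix \<omega> assume "\<omega> \<in> space M"
    show "ennreal K * indicator A \<omega> \<le> ennreal (f (X \<omega>))"
    proof (cases "\<omega> \<in> A")
      case True
      then have "\<alpha>^2 \<le> (X \<omega> $ i - mu $ i)^2"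
      proof -
        have "\<alpha> < \<bar>X \<omega> $ i - mu $ i\<bar>" using True unfolding A_def by simp
        then have "\<bar>\<alpha>\<bar> \<le> \<bar>X \<omega> $ i - mu $ i\<bar>" using a0 by simp
        then show ?thesis unfolding abs_le_square_iff .
      qed
      then have "K \<le> f (X \<omega>)" unfolding K_def f_def using c by (simp add: divide_right_mono)
      then show ?thesis using True by (simp add: ennreal_leI)
    qed simp
  qed
  also note I
  finally have "ennreal K * ennreal (measure M A) \<le> ennreal (sqrt 2)"
    by (simp add: emeasure_eq_measure)
  then have "K * measure M A \<le> sqrt 2"
    using K by (simp add: ennreal_mult[symmetric])
  then have "measure M A \<le> sqrt 2 / K" using K by (simp add: field_simps)
  also have "sqrt 2 / K = sqrt 2 * exp (- (\<alpha>^2) / (4 * \<sigma>^2))"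
    unfolding K_def c_def by (simp add: exp_minus field_simps)
  finally show ?thesis unfolding A_def .
qed

theorem mainTheorem13:
  fixes M :: "'a measure" and X :: "'a \<Rightarrow> real^'n" and mu :: "real^'n" and \<sigma> :: real
  assumes "prob_space M"
    and "X \<in> borel_measurable M"
    and "\<sigma> > 0"
    and "cx_le M X (gauss_iso mu \<sigma>)"
  shows "(\<forall>\<alpha>>0. measure M {\<omega>\<in>space M. linf_norm (X \<omega> - mu) \<le> \<alpha>}
            \<ge> 1 - sqrt 2 * real CARD('n) * exp (- (\<alpha>^2) / (4 * \<sigma>^2)))
       \<and> (\<forall>\<gamma>. 0 < \<gamma> \<and> \<gamma> \<le> 1 \<longrightarrow>
            measure M {\<omega>\<in>space M. linf_norm (X \<omega> - mu)
                \<le> 2 * \<sigma> * sqrt (ln (sqrt 2 * real CARD('n) / \<gamma>))} \<ge> 1 - \<gamma>)"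
proof -
  interpret prob_space M by (rule assms(1))
  note Xm[measurable] = assms(2)
  have gen: "measure M {\<omega>\<in>space M. linf_norm (X \<omega> - mu) \<le> \<alpha>}
            \<ge> 1 - sqrt 2 * real CARD('n) * exp (- (\<alpha>^2) / (4 * \<sigma>^2))" if a0: "0 \<le> \<alpha>" for \<alpha>
  proof -
    define A where "A i = {\<omega>\<in>space M. \<alpha> < \<bar>X \<omega> $ i - mu $ i\<bar>}" for i
    have Am: "A i \<in> sets M" for i unfolding A_def by measurable
    have S: "{\<omega>\<in>space M. linf_norm (X \<omega> - mu) \<le> \<alpha>} = space M - (\<Union>i\<in>UNIV. A i)"
      unfolding A_def linf_le by (auto simp: not_less) (meson not_less)
    have "measure M (\<Union>i\<in>UNIV. A i) \<le> (\<Sum>i\<in>UNIV. measure M (A i))"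
      by (rule measure_UNION_le) (auto simp: Am)
    also have "\<dots> \<le> (\<Sum>i\<in>(UNIV::'n set). sqrt 2 * exp (- (\<alpha>^2) / (4 * \<sigma>^2)))"
      unfolding A_def by (intro sum_mono tail_bound assms a0)
    also have "\<dots> = sqrt 2 * real CARD('n) * exp (- (\<alpha>^2) / (4 * \<sigma>^2))" by simp
    finally have U: "measure M (\<Union>i\<in>UNIV. A i) \<le> sqrt 2 * real CARD('n) * exp (- (\<alpha>^2) / (4 * \<sigma>^2))" .
    have "measure M (space M - (\<Union>i\<in>UNIV. A i)) = 1 - measure M (\<Union>i\<in>UNIV. A i)"
      by (rule prob_compl) (auto simp: Am)
    then show ?thesis unfolding S using U by linarith
  qed
  show ?thesis
  proof (intro conjI allI impI)
    fix \<alpha> :: real assume "0 < \<alpha>" then show "measure M {\<omega>\<in>space M. linf_norm (X \<omega> - mu) \<le> \<alpha>}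
            \<ge> 1 - sqrt 2 * real CARD('n) * exp (- (\<alpha>^2) / (4 * \<sigma>^2))" by (intro gen) simp
  next
    fix \<gamma> :: real assume g: "0 < \<gamma> \<and> \<gamma> \<le> 1"
    define y where "y = sqrt 2 * real CARD('n) / \<gamma>"
    define L where "L = ln y"
    have n1: "1 \<le> real CARD('n)" by simp
    have s2: "1 < sqrt 2" by simp
    have "sqrt 2 * 1 \<le> sqrt 2 * real CARD('n)" using n1 by (intro mult_left_mono) auto
    then have "\<gamma> < sqrt 2 * real CARD('n)" using s2 g by linarith
    then have gt: "1 < y" unfolding y_def using g by simp
    then have L0: "0 \<le> L" unfolding L_def by simp
    have sq: "(2 * \<sigma> * sqrt L)^2 = 4 * \<sigma>^2 * L" using L0 by (simp add: power_mult_distrib)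
    have "- ((2 * \<sigma> * sqrt L)^2) / (4 * \<sigma>^2) = - L" unfolding sq using assms(3) by simp
    then have "exp (- ((2 * \<sigma> * sqrt L)^2) / (4 * \<sigma>^2)) = inverse y"
      unfolding L_def using gt by (simp add: exp_minus)
    also have "inverse y = \<gamma> / (sqrt 2 * real CARD('n))" unfolding y_def by simp
    finally have ex: "exp (- ((2 * \<sigma> * sqrt L)^2) / (4 * \<sigma>^2)) = \<gamma> / (sqrt 2 * real CARD('n))" .
    have eq: "sqrt 2 * real CARD('n) * exp (- ((2 * \<sigma> * sqrt L)^2) / (4 * \<sigma>^2)) = \<gamma>"
      unfolding ex using n1 by simp
    have G: "measure M {\<omega>\<in>space M. linf_norm (X \<omega> - mu) \<le> 2 * \<sigma> * sqrt L}
            \<ge> 1 - sqrt 2 * real CARD('n) * exp (- ((2 * \<sigma> * sqrt L)^2) / (4 * \<sigma>^2))"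
      by (rule gen) (use L0 assms(3) in simp)
    show "measure M {\<omega>\<in>space M. linf_norm (X \<omega> - mu)
                \<le> 2 * \<sigma> * sqrt (ln (sqrt 2 * real CARD('n) / \<gamma>))} \<ge> 1 - \<gamma>"
      using G unfolding eq unfolding L_def y_def .
  qed
qed

end
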